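(* Let $X$ be a real-valued random variable and let $f,g:\mathbb{R}\to\mathbb{R}^+$ be bounded increasing functions. Then $$\operatorname{Var}[f(X)g(X)]\;\geq\;\operatorname{Var}[f(X)]\,\mathbb{E}[g(X)^2].$$ *)

theory Defs
  imports "HOL-Probability.Probability"
begin

end

theory Submission
  imports Defs
begin

definition BM :: "'a measure \<Rightarrow> ('a \<Rightarrow> real) \<Rightarrow> bool" where
  "BM M \<phi> \<longleftrightarrow> \<phi> \<in> borel_measurable M \<and> (\<exists>B. \<forall>x\<in>space M. \<bar>\<phi> x\<bar> \<le> B)"

lemma BM_const[simp]: "BM M (\<lambda>x. c)"
  unfolding BM_def by auto

lemma BM_add[simp]: "BM M f \<Longrightarrow> BM M g \<Longrightarrow> BM M (\<lambda>x. f x + g x)"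
  unfolding BM_def
proof (elim conjE exE, intro conjI)
  fix B1 B2 assume "\<forall>x\<in>space M. \<bar>f x\<bar> \<le> B1" "\<forall>x\<in>space M. \<bar>g x\<bar> \<le> B2"
  then show "\<exists>B. \<forall>x\<in>space M. \<bar>f x + g x\<bar> \<le> B"
    by (intro exI[of _ "B1+B2"]) (auto intro: order.trans[OF abs_triangle_ineq] add_mono)
qed auto

lemma BM_diff[simp]: "BM M f \<Longrightarrow> BM M g \<Longrightarrow> BM M (\<lambda>x. f x - g x)"
  unfolding BM_def
proof (elim conjE exE, intro conjI)
  fix B1 B2 assume "\<forall>x\<in>space M. \<bar>f x\<bar> \<le> B1" "\<forall>x\<in>space M. \<bar>g x\<bar> \<le> B2"
  then show "\<exists>B. \<forall>x\<in>space M. \<bar>f x - g x\<bar> \<le> B"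
    by (intro exI[of _ "B1+B2"]) (auto intro: order.trans[OF abs_triangle_ineq4] add_mono)
qed auto

lemma BM_mult[simp]: "BM M f \<Longrightarrow> BM M g \<Longrightarrow> BM M (\<lambda>x. f x * g x)"
  unfolding BM_def
proof (elim conjE exE, intro conjI)
  fix B1 B2 assume a: "\<forall>x\<in>space M. \<bar>f x\<bar> \<le> B1" "\<forall>x\<in>space M. \<bar>g x\<bar> \<le> B2"
  show "\<exists>B. \<forall>x\<in>space M. \<bar>f x * g x\<bar> \<le> B"
  proof (intro exI[of _ "\<bar>B1\<bar> * \<bar>B2\<bar>"] ballI)
    fix x assume "x \<in> space M"
    then have "\<bar>f x\<bar> \<le> \<bar>B1\<bar>" "\<bar>g x\<bar> \<le> \<bar>B2\<bar>" using a by force+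
    then show "\<bar>f x * g x\<bar> \<le> \<bar>B1\<bar> * \<bar>B2\<bar>"
      by (simp add: abs_mult mult_mono)
  qed
qed auto

lemma BM_power[simp]: "BM M f \<Longrightarrow> BM M (\<lambda>x. f x ^ n)"
  by (induction n) auto

lemma BM_integrable[simp]: "finite_measure M \<Longrightarrow> BM M f \<Longrightarrow> integrable M f"
  unfolding BM_def
  by (auto intro!: finite_measure.integrable_const_bound AE_I2)

lemma core:
  fixes f g :: "real \<Rightarrow> real" and p q r :: real
  assumes "mono f" "mono g" "\<And>x. f x \<ge> 0" "\<And>x. g x \<ge> 0" "p \<le> q" "q \<le> r"
  shows "0 \<le> ((f p * g p - f q * g q)\<^sup>2 - (f p - f q)\<^sup>2 * (g r)\<^sup>2)
            + ((f p * g p - f r * g r)\<^sup>2 - (f p - f r)\<^sup>2 * (g q)\<^sup>2)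
            + ((f q * g q - f r * g r)\<^sup>2 - (f q - f r)\<^sup>2 * (g p)\<^sup>2)"
proof -
  have m: "f p \<le> f q" "f q \<le> f r" "g p \<le> g q" "g q \<le> g r"
    using assms by (auto simp: mono_def)
  have key: "(f j - f i)\<^sup>2 * (g j)\<^sup>2 \<le> (f i * g i - f j * g j)\<^sup>2"
    if "i \<le> j" for i j
  proof -
    have a: "f i \<le> f j" "g i \<le> g j" using that assms by (auto simp: mono_def)
    have "f j * g j - f i * g i = (f j - f i) * g j + f i * (g j - g i)" by algebra
    also have "\<dots> \<ge> (f j - f i) * g j" using a assms(3)[of i] by simp
    finally have b: "(f j - f i) * g j \<le> f j * g j - f i * g i" .
    have c: "0 \<le> (f j - f i) * g j" using a assms(4)[of j] by simp
    have "((f j - f i) * g j)\<^sup>2 \<le> (f j * g j - f i * g i)\<^sup>2"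
      using b c by (intro power_mono) auto
    then show ?thesis by (simp add: power_mult_distrib power2_commute)
  qed
  have k1: "(f q - f p)\<^sup>2 * (g q)\<^sup>2 \<le> (f p * g p - f q * g q)\<^sup>2" using key assms by simp
  have k2: "(f r - f p)\<^sup>2 * (g r)\<^sup>2 \<le> (f p * g p - f r * g r)\<^sup>2" using key assms by simp
  have k3: "(f r - f q)\<^sup>2 * (g r)\<^sup>2 \<le> (f q * g q - f r * g r)\<^sup>2" using key assms by simp
  have A: "(f q - f p)\<^sup>2 \<le> (f r - f p)\<^sup>2" using m by (intro power_mono) auto
  have G1: "(g q)\<^sup>2 \<le> (g r)\<^sup>2" "(g p)\<^sup>2 \<le> (g r)\<^sup>2" using m assms(4)[of p] by (intro power_mono; auto)+
  have P1: "0 \<le> ((f r - f p)\<^sup>2 - (f q - f p)\<^sup>2) * ((g r)\<^sup>2 - (g q)\<^sup>2)"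
    using A G1 by simp
  have P2: "0 \<le> (f r - f q)\<^sup>2 * ((g r)\<^sup>2 - (g p)\<^sup>2)" using G1 by simp
  have eq: "(f q - f p)\<^sup>2 * (g q)\<^sup>2 + (f r - f p)\<^sup>2 * (g r)\<^sup>2 + (f r - f q)\<^sup>2 * (g r)\<^sup>2
     - (f p - f q)\<^sup>2 * (g r)\<^sup>2 - (f p - f r)\<^sup>2 * (g q)\<^sup>2 - (f q - f r)\<^sup>2 * (g p)\<^sup>2
     = ((f r - f p)\<^sup>2 - (f q - f p)\<^sup>2) * ((g r)\<^sup>2 - (g q)\<^sup>2) + (f r - f q)\<^sup>2 * ((g r)\<^sup>2 - (g p)\<^sup>2)"
    by (simp add: power2_commute algebra_simps)
  show ?thesis using k1 k2 k3 P1 P2 eq by linarith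
qed


definition Tr :: "(real \<Rightarrow> real) \<Rightarrow> (real \<Rightarrow> real) \<Rightarrow> real \<Rightarrow> real \<Rightarrow> real \<Rightarrow> real" where
  "Tr f g x y z = (f x * g x - f y * g y)\<^sup>2 - (f x - f y)\<^sup>2 * (g z)\<^sup>2"

definition Qr :: "(real \<Rightarrow> real) \<Rightarrow> (real \<Rightarrow> real) \<Rightarrow> real \<Rightarrow> real \<Rightarrow> real \<Rightarrow> real" where
  "Qr f g p q r = Tr f g p q r + Tr f g p r q + Tr f g q r p"

lemma core_all:
  fixes f g :: "real \<Rightarrow> real"
  assumes "mono f" "mono g" "\<And>x. f x \<ge> 0" "\<And>x. g x \<ge> 0"
  shows "0 \<le> Qr f g p q r"
proof -
  have c: "0 \<le> Qr f g x y z" if "x \<le> y" "y \<le> z" for x y z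
    using core[OF assms that] unfolding Qr_def Tr_def by simp
  have s1: "Qr f g p q r = Qr f g q p r" unfolding Qr_def Tr_def by algebra
  have s2: "Qr f g p q r = Qr f g p r q" unfolding Qr_def Tr_def by algebra
  have s3: "Qr f g p q r = Qr f g r q p" unfolding Qr_def Tr_def by algebra
  have s4: "Qr f g p q r = Qr f g q r p" unfolding Qr_def Tr_def by algebra
  have s5: "Qr f g p q r = Qr f g r p q" unfolding Qr_def Tr_def by algebra
  show ?thesis
  proof (cases "p \<le> q")
    case True
    then show ?thesis
    proof (cases "q \<le> r")
      case True with \<open>p \<le> q\<close> show ?thesis using c by auto
    next
      case False
      then show ?thesis
      proof (cases "p \<le> r")
        case True with False show ?thesis using c[of p r q] s2 by auto
      next
        case False2: False
        then show ?thesis using c[of r p q] s5 \<open>p \<le> q\<close> by auto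
      qed
    qed
  next
    case False
    then show ?thesis
    proof (cases "p \<le> r")
      case True with False show ?thesis using c[of q p r] s1 by auto
    next
      case False2: False
      then show ?thesis
      proof (cases "q \<le> r")
        case True with False2 show ?thesis using c[of q r p] s4 by auto
      next
        case False3: False
        with False show ?thesis using c[of r q p] s3 by auto
      qed
    qed
  qed
qed


theorem lemma4p10:
  fixes M :: "'a measure" and X :: "'a \<Rightarrow> real" and f g :: "real \<Rightarrow> real"
  assumes "prob_space M"
    and "X \<in> borel_measurable M"
    and "mono f" and "mono g"
    and "bounded (range f)" and "bounded (range g)"
    and "\<And>x. f x \<ge> 0" and "\<And>x. g x \<ge> 0"
  shows "prob_space.variance M (\<lambda>\<omega>. f (X \<omega>) * g (X \<omega>))
           \<ge> prob_space.variance M (\<lambda>\<omega>. f (X \<omega>))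
              * prob_space.expectation M (\<lambda>\<omega>. (g (X \<omega>))^2)"
proof -
  interpret prob_space M by fact
  have fm: "finite_measure M" by unfold_locales
  have bmf: "BM M (\<lambda>\<omega>. f (X \<omega>))"
  proof -
    obtain B where B: "\<forall>x\<in>range f. norm x \<le> B" using assms(5) unfolding bounded_iff by blast
    have "(\<lambda>\<omega>. f (X \<omega>)) \<in> borel_measurable M"
      using measurable_compose[OF assms(2) borel_measurable_mono[OF assms(3)]] by simp
    then show ?thesis unfolding BM_def using B by auto
  qed
  have bmg: "BM M (\<lambda>\<omega>. g (X \<omega>))"
  proof -
    obtain B where B: "\<forall>x\<in>range g. norm x \<le> B" using assms(6) unfolding bounded_iff by blast
    have "(\<lambda>\<omega>. g (X \<omega>)) \<in> borel_measurable M"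
      using measurable_compose[OF assms(2) borel_measurable_mono[OF assms(4)]] by simp
    then show ?thesis unfolding BM_def using B by auto
  qed
  define u where "u = (\<lambda>\<omega>. f (X \<omega>))"
  define w where "w = (\<lambda>\<omega>. f (X \<omega>) * g (X \<omega>))"
  define h where "h = (\<lambda>\<omega>. (g (X \<omega>))\<^sup>2)"
  have bu: "BM M u" using bmf unfolding u_def .
  have bw: "BM M w" using bmf bmg unfolding w_def by simp
  have bh: "BM M h" using bmg unfolding h_def by simp
  define Q where "Q = (\<lambda>a b c. ((w a - w b)\<^sup>2 - (u a - u b)\<^sup>2 * h c)
     + ((w a - w c)\<^sup>2 - (u a - u c)\<^sup>2 * h b) + ((w b - w c)\<^sup>2 - (u b - u c)\<^sup>2 * h a))"
  have Qnn: "0 \<le> Q a b c" for a b c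
    using core_all[OF assms(3,4,7,8), of "X a" "X b" "X c"]
    unfolding Q_def Qr_def Tr_def u_def w_def h_def by simp
  define I where "I = integral\<^sup>L M (\<lambda>c. integral\<^sup>L M (\<lambda>b. integral\<^sup>L M (\<lambda>a. Q a b c)))"
  have I: "I = 6 * (expectation (\<lambda>c. (w c)\<^sup>2) - (expectation w)\<^sup>2)
              - 6 * (expectation (\<lambda>c. (u c)\<^sup>2) - (expectation u)\<^sup>2) * expectation h"
    unfolding I_def Q_def using bu bw bh fm apply (simp add: power2_diff prob_space)
    by algebra
  have "0 \<le> I" unfolding I_def by (intro Bochner_Integration.integral_nonneg Qnn)
  have vw: "variance w = expectation (\<lambda>c. (w c)\<^sup>2) - (expectation w)\<^sup>2"
    using bw fm by (intro variance_eq) auto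
  have vu: "variance u = expectation (\<lambda>c. (u c)\<^sup>2) - (expectation u)\<^sup>2"
    using bu fm by (intro variance_eq) auto
  have "variance w \<ge> variance u * expectation h"
  proof -
    have "I = 6 * (variance w - variance u * expectation h)" unfolding I vw vu by algebra
    then show ?thesis using \<open>0 \<le> I\<close> by (simp add: zero_le_mult_iff)
  qed
  then show ?thesis unfolding u_def w_def h_def .
qed

end
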